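(* (1) $\mathsf{SCR}\subsetneq\mathsf{RAT}$ (every subsequence-closed relation is rational, and some rational relation is not subsequence-closed). (2) $\mathsf{SCR}\not\subseteq\mathsf{REG}$ and $\mathsf{REG}\not\subseteq\mathsf{SCR}$.
   Context: Over finite alphabets $\Sigma,\Gamma$: $u\sqsubseteq u'$ means $u$ is obtained from $u'$ by deleting some (possibly no) letters. $\mathsf{RAT}$ is the class of binary rational relations (accepted by 2-tape asynchronous finite automata, equivalently denoted by regular expressions over pairs in $(\Sigma\cup\{\varepsilon\})\times(\Gamma\cup\{\varepsilon\})$ with union, componentwise concatenation and star). $\mathsf{REG}$ is the class of binary regular relations: those $R$ for which some NFA over $\Sigma_\bot\times\Gamma_\bot$ accepts exactly $\{w_1\otimes w_2:(w_1,w_2)\in R\}$, where $w_1\otimes w_2$ is the letterwise pairing padded with a fresh symbol $\bot$ to length $\max(|w_1|,|w_2|)$. For $R\subseteq\Sigma^*\times\Gamma^*$, $R_{\sqsubseteq}=\{(u,w):u\sqsubseteq u'\text{ and }(u',w)\in R\text{ for some }u'\}$. The class of subsequence-closed relations is $\mathsf{SCR}=\{R_{\sqsubseteq}:R\in\mathsf{RAT}\}$. *)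

theory Defs
  imports Main "HOL-Library.Sublist"
begin

definition conc_rel :: "('a list \<times> 'b list) set \<Rightarrow> ('a list \<times> 'b list) set \<Rightarrow> ('a list \<times> 'b list) set" where
  "conc_rel R S = {(u @ u', w @ w') | u w u' w'. (u, w) \<in> R \<and> (u', w') \<in> S}"

inductive_set star_rel :: "('a list \<times> 'b list) set \<Rightarrow> ('a list \<times> 'b list) set"
  for R :: "('a list \<times> 'b list) set" where
  star_nil: "([], []) \<in> star_rel R"
| star_step: "(u, w) \<in> R \<Longrightarrow> (u', w') \<in> star_rel R \<Longrightarrow> (u @ u', w @ w') \<in> star_rel R"

text \<open>RAT: relations denoted by regular expressions over atoms in
  (Sigma \<union> {eps}) \<times> (Gamma \<union> {eps}), built with union, componentwise concatenation and star.\<close>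
inductive RAT :: "('a list \<times> 'b list) set \<Rightarrow> bool" where
  rat_empty: "RAT {}"
| rat_atom: "length u \<le> 1 \<Longrightarrow> length w \<le> 1 \<Longrightarrow> RAT {(u, w)}"
| rat_union: "RAT R \<Longrightarrow> RAT S \<Longrightarrow> RAT (R \<union> S)"
| rat_conc: "RAT R \<Longrightarrow> RAT S \<Longrightarrow> RAT (conc_rel R S)"
| rat_star: "RAT R \<Longrightarrow> RAT (star_rel R)"

text \<open>Padded convolution w1 \<otimes> w2, with None playing the role of the padding symbol \<bottom>.\<close>
definition conv :: "'a list \<Rightarrow> 'b list \<Rightarrow> ('a option \<times> 'b option) list" where
  "conv u w = map (\<lambda>i. (if i < length u then Some (u ! i) else None,
                        if i < length w then Some (w ! i) else None))
                  [0..<max (length u) (length w)]"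

record 'c nfa =
  states :: "nat set"
  init :: "nat set"
  trans :: "(nat \<times> 'c \<times> nat) set"
  final :: "nat set"

definition wf_nfa :: "'c nfa \<Rightarrow> bool" where
  "wf_nfa A \<longleftrightarrow> finite (states A) \<and> init A \<subseteq> states A \<and> final A \<subseteq> states A
     \<and> trans A \<subseteq> states A \<times> UNIV \<times> states A"

inductive accepts_from :: "'c nfa \<Rightarrow> nat \<Rightarrow> 'c list \<Rightarrow> bool" for A where
  acc_nil: "q \<in> final A \<Longrightarrow> accepts_from A q []"
| acc_cons: "(q, x, q') \<in> trans A \<Longrightarrow> accepts_from A q' xs \<Longrightarrow> accepts_from A q (x # xs)"

definition lang :: "'c nfa \<Rightarrow> 'c list set" where
  "lang A = {xs. \<exists>q \<in> init A. accepts_from A q xs}"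

definition REG :: "('a list \<times> 'b list) set \<Rightarrow> bool" where
  "REG R \<longleftrightarrow> (\<exists>A :: ('a option \<times> 'b option) nfa. wf_nfa A \<and>
      lang A = {conv u w | u w. (u, w) \<in> R})"

definition sub_closure :: "('a list \<times> 'b list) set \<Rightarrow> ('a list \<times> 'b list) set" where
  "sub_closure R = {(u, w). \<exists>u'. subseq u u' \<and> (u', w) \<in> R}"

definition SCR :: "('a list \<times> 'b list) set \<Rightarrow> bool" where
  "SCR S \<longleftrightarrow> (\<exists>R. RAT R \<and> S = sub_closure R)"

end

theory Submission
  imports Defs
begin

lemma sc_union: "sub_closure (R \<union> S) = sub_closure R \<union> sub_closure S"
  unfolding sub_closure_def by auto

lemma sc_conc: "sub_closure (conc_rel R S) = conc_rel (sub_closure R) (sub_closure S)"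
  unfolding sub_closure_def conc_rel_def
  apply (auto simp: subseq_append_iff)
  apply blast
  by (metis list_emb_append_mono)

lemma sc_star1: "(u', w) \<in> star_rel R \<Longrightarrow> subseq u u' \<Longrightarrow> (u, w) \<in> star_rel (sub_closure R)"
proof (induction u' w arbitrary: u rule: star_rel.induct)
  case star_nil
  then show ?case using star_rel.star_nil list_emb_Nil2 by metis
next
  case (star_step u1 w1 u2 w2)
  from star_step.prems obtain v1 v2 where "u = v1 @ v2" "subseq v1 u1" "subseq v2 u2"
    by (auto elim: subseq_appendE)
  moreover have "(v1, w1) \<in> sub_closure R" using star_step \<open>subseq v1 u1\<close>
    unfolding sub_closure_def by auto
  ultimately show ?case using star_step star_rel.star_step by metis
qed

lemma sc_star2: "(u, w) \<in> star_rel (sub_closure R) \<Longrightarrow> (u, w) \<in> sub_closure (star_rel R)"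
proof (induction u w rule: star_rel.induct)
  case star_nil
  then show ?case unfolding sub_closure_def by (auto intro: star_rel.star_nil)
next
  case (star_step u1 w1 u2 w2)
  then obtain x1 x2 where "subseq u1 x1" "(x1, w1) \<in> R" "subseq u2 x2" "(x2, w2) \<in> star_rel R"
    unfolding sub_closure_def by auto
  then show ?case unfolding sub_closure_def
    by (auto intro!: exI[of _ "x1 @ x2"] list_emb_append_mono star_rel.star_step)
qed

lemma sc_star: "sub_closure (star_rel R) = star_rel (sub_closure R)"
  using sc_star1 sc_star2 unfolding sub_closure_def by fastforce

lemma subseq_single_iff: "subseq v [x] \<longleftrightarrow> v = [] \<or> v = [x]"
proof
  assume h: "subseq v [x]"
  show "v = [] \<or> v = [x]"
  proof (cases v)
    case Nil then show ?thesis by simp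
  next
    case (Cons y ys)
    have "length v \<le> 1" using list_emb_length[OF h] by simp
    then have "ys = []" using Cons by simp
    have "y \<in> set v" using Cons by simp
    then obtain z where "z \<in> set [x]" "y = z" using list_emb_set[OF h] by blast
    then show ?thesis using Cons \<open>ys = []\<close> by simp
  qed
next
  assume "v = [] \<or> v = [x]"
  then show "subseq v [x]" by auto
qed

lemma sc_atom:
  assumes lu: "length u \<le> 1" and lw: "length w \<le> 1"
  shows "RAT (sub_closure {(u, w)})"
proof (cases u)
  case Nil
  have "sub_closure {(u, w)} = {([], w)}" using Nil unfolding sub_closure_def by auto
  moreover have "RAT {([], w)}" using lw by (intro rat_atom) auto
  ultimately show ?thesis by simp
next
  case (Cons x xs)
  then have u: "u = [x]" using lu by auto
  have "sub_closure {(u, w)} = {([x], w)} \<union> {([], w)}" using u unfolding sub_closure_def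
    by (auto simp: subseq_single_iff)
  moreover have "RAT ({([x], w)} \<union> {([], w)})" using lw by (intro rat_union rat_atom) auto
  ultimately show ?thesis by simp
qed

lemma RAT_sc: "RAT R \<Longrightarrow> RAT (sub_closure R)"
proof (induction rule: RAT.induct)
  case rat_empty
  then show ?case by (simp add: sub_closure_def RAT.rat_empty)
next
  case (rat_atom u w) then show ?case by (rule sc_atom)
next
  case (rat_union R S) then show ?case by (simp add: sc_union RAT.rat_union)
next
  case (rat_conc R S) then show ?case by (simp add: sc_conc RAT.rat_conc)
next
  case (rat_star R) then show ?case by (simp add: sc_star RAT.rat_star)
qed


lemma SCR_nil: "SCR S \<Longrightarrow> (u, w) \<in> S \<Longrightarrow> ([], w) \<in> S"
  unfolding SCR_def sub_closure_def by auto

lemma not_SCR_single: "\<not> SCR {([x], [])}"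
  using SCR_nil[of "{([x], [])}" "[x]" "[]"] by auto

lemma RAT_single: "RAT {([x], [])}"
  by (rule rat_atom) auto

definition A1 :: "'a \<Rightarrow> ('a option \<times> 'b option) nfa" where
  "A1 x = \<lparr>states = {0, 1}, init = {0}, trans = {(0, (Some x, None), 1)}, final = {1}\<rparr>"

lemma A1_lang: "lang (A1 x :: ('a option \<times> 'b option) nfa) = {[(Some x, None)]}"
proof (intro set_eqI iffI)
  fix xs :: "('a option \<times> 'b option) list"
  assume "xs \<in> lang (A1 x)"
  then have "accepts_from (A1 x) 0 xs" by (auto simp: lang_def A1_def)
  then show "xs \<in> {[(Some x, None)]}"
  proof cases
    case acc_nil then show ?thesis by (simp add: A1_def)
  next
    case (acc_cons y q' ys)
    then have "q' = 1" "y = (Some x, None)" by (auto simp: A1_def)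
    from acc_cons(3)[unfolded \<open>q' = 1\<close>] have "ys = []"
      by cases (auto simp: A1_def)
    then show ?thesis using acc_cons \<open>y = _\<close> by simp
  qed
next
  fix xs :: "('a option \<times> 'b option) list"
  assume "xs \<in> {[(Some x, None)]}"
  then have xs: "xs = [(Some x, None)]" by simp
  have "accepts_from (A1 x) 1 []" by (rule acc_nil) (simp add: A1_def)
  then have "accepts_from (A1 x) 0 [(Some x, None)]" by (rule acc_cons[rotated]) (simp add: A1_def)
  then show "xs \<in> lang (A1 x)" using xs by (simp add: lang_def A1_def)
qed

lemma REG_single: "REG {([x], [] :: 'b list)}"
  unfolding REG_def
proof (intro exI[of _ "A1 x"] conjI)
  show "wf_nfa (A1 x :: ('a option \<times> 'b option) nfa)" by (auto simp: wf_nfa_def A1_def)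
  have "conv [x] ([] :: 'b list) = [(Some x, None)]" by (simp add: conv_def)
  then show "lang (A1 x :: ('a option \<times> 'b option) nfa) = {conv u w |u w. (u, w) \<in> {([x], [] :: 'b list)}}"
    by (simp add: A1_lang)
qed


inductive path :: "'c nfa \<Rightarrow> nat \<Rightarrow> 'c list \<Rightarrow> nat \<Rightarrow> bool" for A where
  path_nil: "path A q [] q"
| path_cons: "(q, x, q') \<in> trans A \<Longrightarrow> path A q' xs q'' \<Longrightarrow> path A q (x # xs) q''"

inductive_cases path_consE: "path A q (x # xs) q'"

lemma acc_path: "accepts_from A q xs \<longleftrightarrow> (\<exists>q'. path A q xs q' \<and> q' \<in> final A)"
proof
  show "accepts_from A q xs \<Longrightarrow> \<exists>q'. path A q xs q' \<and> q' \<in> final A"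
    by (induction rule: accepts_from.induct) (auto intro: path.intros)
next
  assume "\<exists>q'. path A q xs q' \<and> q' \<in> final A"
  then obtain q' where "path A q xs q'" "q' \<in> final A" by blast
  then show "accepts_from A q xs"
    by (induction rule: path.induct) (auto intro: accepts_from.intros)
qed

lemma path_append: "path A q (xs @ ys) q'' \<longleftrightarrow> (\<exists>q'. path A q xs q' \<and> path A q' ys q'')"
proof (induction xs arbitrary: q)
  case Nil
  then show ?case by (auto intro: path.intros elim: path.cases)
next
  case (Cons x xs)
  have "path A q ((x # xs) @ ys) q'' \<longleftrightarrow> (\<exists>p. (q, x, p) \<in> trans A \<and> path A p (xs @ ys) q'')"
    by (auto intro: path.intros elim: path.cases)
  also have "\<dots> \<longleftrightarrow> (\<exists>p q'. (q, x, p) \<in> trans A \<and> path A p xs q' \<and> path A q' ys q'')"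
    using Cons by blast
  also have "\<dots> \<longleftrightarrow> (\<exists>q'. path A q (x # xs) q' \<and> path A q' ys q'')"
  proof
    assume "\<exists>p q'. (q, x, p) \<in> trans A \<and> path A p xs q' \<and> path A q' ys q''"
    then show "\<exists>q'. path A q (x # xs) q' \<and> path A q' ys q''" by (blast intro: path.intros)
  next
    assume "\<exists>q'. path A q (x # xs) q' \<and> path A q' ys q''"
    then obtain q' where h: "path A q (x # xs) q'" "path A q' ys q''" by blast
    from h(1) obtain p where "(q, x, p) \<in> trans A" "path A p xs q'" by (rule path_consE)
    then show "\<exists>p q'. (q, x, p) \<in> trans A \<and> path A p xs q' \<and> path A q' ys q''" using h(2) by blast
  qed
  finally show ?case .
qed

lemma path_states: "path A q xs q' \<Longrightarrow> wf_nfa A \<Longrightarrow> q \<in> states A \<Longrightarrow> q' \<in> states A"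
  by (induction rule: path.induct) (auto simp: wf_nfa_def)

lemma pump_down:
  assumes wf: "wf_nfa A" and q0: "q0 \<in> states A" and p: "path A q0 (x @ y) qf"
    and len: "card (states A) \<le> length y"
  obtains i j where "i < j" "j \<le> length y" "path A q0 (x @ take i y @ drop j y) qf"
proof -
  have ex: "\<exists>s. path A q0 (x @ take i y) s \<and> path A s (drop i y) qf" for i
  proof -
    have "x @ y = (x @ take i y) @ drop i y" by simp
    then show ?thesis using p path_append by metis
  qed
  define f where "f i = (SOME s. path A q0 (x @ take i y) s \<and> path A s (drop i y) qf)" for i
  have f: "path A q0 (x @ take i y) (f i) \<and> path A (f i) (drop i y) qf" for i
    unfolding f_def using someI_ex[OF ex] .
  have sub: "f ` {0..length y} \<subseteq> states A"
    using f path_states wf q0 by blast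
  have fin: "finite (states A)" using wf by (simp add: wf_nfa_def)
  have "card (f ` {0..length y}) \<le> card (states A)" using card_mono[OF fin sub] .
  then have "card (f ` {0..length y}) < card {0..length y}" using len by simp
  then have "\<not> inj_on f {0..length y}" by (rule pigeonhole)
  then obtain i j where ij: "i \<in> {0..length y}" "j \<in> {0..length y}" "i \<noteq> j" "f i = f j"
    unfolding inj_on_def by blast
  then obtain i' j' where ij': "i' < j'" "j' \<le> length y" "f i' = f j'"
    by (metis atLeastAtMost_iff linorder_neqE_nat)
  have "path A q0 (x @ take i' y @ drop j' y) qf"
    using f[of i'] f[of j'] ij'(3) path_append[of A q0 "x @ take i' y" "drop j' y" qf] by auto
  then show ?thesis using ij'(1,2) that by blast
qed

lemma map_fst_conv: "map fst (conv u w) = map Some u @ replicate (max (length u) (length w) - length u) None"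
  by (rule nth_equalityI) (auto simp: conv_def nth_append)

lemma map_snd_conv: "map snd (conv u w) = map Some w @ replicate (max (length u) (length w) - length w) None"
  by (rule nth_equalityI) (auto simp: conv_def nth_append)

lemma filter_Some: "filter (\<lambda>x. x \<noteq> None) (map Some u @ replicate k None) = map Some u"
  by (induction u) (auto simp: filter_empty_conv)

lemma conv_inj: "conv u w = conv u' w' \<Longrightarrow> u = u' \<and> w = w'"
proof -
  assume h: "conv u w = conv u' w'"
  have "u = map the (filter (\<lambda>x. x \<noteq> None) (map fst (conv u w)))"
    by (simp only: map_fst_conv filter_Some) (simp add: comp_def)
  moreover have "u' = map the (filter (\<lambda>x. x \<noteq> None) (map fst (conv u' w')))"
    by (simp only: map_fst_conv filter_Some) (simp add: comp_def)
  moreover have "w = map the (filter (\<lambda>x. x \<noteq> None) (map snd (conv u w)))"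
    by (simp only: map_snd_conv filter_Some) (simp add: comp_def)
  moreover have "w' = map the (filter (\<lambda>x. x \<noteq> None) (map snd (conv u' w')))"
    by (simp only: map_snd_conv filter_Some) (simp add: comp_def)
  ultimately show ?thesis using h by metis
qed

lemma conv_rep: "conv (replicate n a) (replicate (n + m) b) =
   replicate n (Some a, Some b) @ replicate m (None, Some b)"
  by (rule nth_equalityI) (auto simp: conv_def nth_append)

definition S0 :: "'a \<Rightarrow> 'b \<Rightarrow> ('a list \<times> 'b list) set" where
  "S0 a b = star_rel (conc_rel {([a], [b])} {([], [b])})"

lemma S0_RAT: "RAT (S0 a b)"
  unfolding S0_def by (intro rat_star rat_conc rat_atom) auto

lemma S0_form: "(u, w) \<in> S0 a b \<Longrightarrow> \<exists>n. u = replicate n a \<and> w = replicate (2 * n) b"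
  unfolding S0_def
proof (induction rule: star_rel.induct)
  case star_nil
  then show ?case by (intro exI[of _ 0]) simp
next
  case (star_step u w u' w')
  then obtain n where "u' = replicate n a" "w' = replicate (2 * n) b" by blast
  moreover have "u = [a]" "w = [b, b]" using star_step(1) by (auto simp: conc_rel_def)
  ultimately show ?case by (intro exI[of _ "Suc n"]) simp
qed

lemma S0_mem: "(replicate n a, replicate (2 * n) b) \<in> S0 a b"
proof (induction n)
  case 0
  then show ?case by (simp add: S0_def star_rel.star_nil)
next
  case (Suc n)
  have "([a], [b, b]) \<in> conc_rel {([a], [b])} {([], [b])}"
    unfolding conc_rel_def by force
  from star_rel.star_step[OF this Suc[unfolded S0_def]] show ?case by (simp add: S0_def)
qed

lemma not_REG: "\<not> REG (sub_closure (S0 a b))"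
proof
  assume "REG (sub_closure (S0 a b))"
  then obtain A :: "('a option \<times> 'b option) nfa" where wf: "wf_nfa A"
    and L: "lang A = {conv u w | u w. (u, w) \<in> sub_closure (S0 a b)}"
    unfolding REG_def by blast
  define n where "n = card (states A)"
  have "(replicate n a, replicate (2 * n) b) \<in> S0 a b" by (rule S0_mem)
  then have "(replicate n a, replicate (n + n) b) \<in> sub_closure (S0 a b)"
    unfolding sub_closure_def mult_2 by blast
  then have "conv (replicate n a) (replicate (n + n) b) \<in> lang A" unfolding L by blast
  then have "replicate n (Some a, Some b) @ replicate n (None, Some b) \<in> lang A"
    by (simp only: conv_rep)
  then obtain q0 qf where q0: "q0 \<in> init A" and qf: "qf \<in> final A"
    and p: "path A q0 (replicate n (Some a, Some b) @ replicate n (None, Some b)) qf"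
    unfolding lang_def acc_path by blast
  have q0s: "q0 \<in> states A" using q0 wf unfolding wf_nfa_def by blast
  have len: "card (states A) \<le> length (replicate n (None, Some b))" unfolding length_replicate n_def by (rule le_refl)
  let ?y = "replicate n (None :: 'a option, Some b)"
  let ?y = "replicate n (None :: 'a option, Some b)"
  obtain i j where ij: "i < j" "j \<le> length ?y"
    and p2: "path A q0 (replicate n (Some a, Some b) @ take i ?y @ drop j ?y) qf"
    by (rule pump_down[OF wf q0s p len])
  have jn: "j \<le> n" using ij(2) by simp
  have eq: "take i ?y @ drop j ?y = replicate (i + (n - j)) (None, Some b)"
    using ij jn by (simp add: replicate_add[symmetric])
  have "path A q0 (replicate n (Some a, Some b) @ replicate (i + (n - j)) (None, Some b)) qf"
    using p2 unfolding eq .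
  then have "replicate n (Some a, Some b) @ replicate (i + (n - j)) (None, Some b) \<in> lang A"
    using q0 qf unfolding lang_def acc_path by blast
  then have "conv (replicate n a) (replicate (n + (i + (n - j))) b) \<in> lang A"
    by (simp only: conv_rep)
  then obtain u w where uw: "conv (replicate n a) (replicate (n + (i + (n - j))) b) = conv u w"
    "(u, w) \<in> sub_closure (S0 a b)" unfolding L by blast
  from conv_inj[OF uw(1)] uw(2) have "(replicate n a, replicate (n + (i + (n - j))) b) \<in> sub_closure (S0 a b)"
    by simp
  then obtain u' where su: "subseq (replicate n a) u'" and u'S: "(u', replicate (n + (i + (n - j))) b) \<in> S0 a b"
    unfolding sub_closure_def by blast
  from S0_form[OF u'S] obtain m where m: "u' = replicate m a" "replicate (n + (i + (n - j))) b = replicate (2 * m) b"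
    by blast
  have e1: "n + (i + (n - j)) = 2 * m" using arg_cong[OF m(2), of length] by simp
  have e2: "n \<le> m" using list_emb_length[OF su] m(1) by simp
  show False using e1 e2 ij(1) jn by linarith
qed


theorem mainTheorem11:
  shows "((\<forall>R :: ('a::finite list \<times> 'b::finite list) set. SCR R \<longrightarrow> RAT R)
          \<and> (\<exists>R :: ('a list \<times> 'b list) set. RAT R \<and> \<not> SCR R))
       \<and> ((\<exists>R :: ('a list \<times> 'b list) set. SCR R \<and> \<not> REG R)
          \<and> (\<exists>R :: ('a list \<times> 'b list) set. REG R \<and> \<not> SCR R))"
proof (intro conjI allI impI)
  fix R :: "('a list \<times> 'b list) set"
  assume "SCR R"
  then obtain R' where "RAT R'" "R = sub_closure R'" unfolding SCR_def by blast
  then show "RAT R" using RAT_sc by simp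
next
  show "\<exists>R :: ('a list \<times> 'b list) set. RAT R \<and> \<not> SCR R"
  proof (rule exI[of _ "{([undefined::'a], [] :: 'b list)}"], rule conjI)
    show "RAT {([undefined::'a], [] :: 'b list)}" by (rule RAT_single)
    show "\<not> SCR {([undefined::'a], [] :: 'b list)}" by (rule not_SCR_single)
  qed
next
  show "\<exists>R :: ('a list \<times> 'b list) set. SCR R \<and> \<not> REG R"
  proof (rule exI[of _ "sub_closure (S0 (undefined::'a) (undefined::'b))"], rule conjI)
    show "SCR (sub_closure (S0 (undefined::'a) (undefined::'b)))"
      unfolding SCR_def by (rule exI[of _ "S0 undefined undefined"]) (simp add: S0_RAT)
    show "\<not> REG (sub_closure (S0 (undefined::'a) (undefined::'b)))" by (rule not_REG)
  qed
next
  show "\<exists>R :: ('a list \<times> 'b list) set. REG R \<and> \<not> SCR R"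
  proof (rule exI[of _ "{([undefined::'a], [] :: 'b list)}"], rule conjI)
    show "REG {([undefined::'a], [] :: 'b list)}" by (rule REG_single)
    show "\<not> SCR {([undefined::'a], [] :: 'b list)}" by (rule not_SCR_single)
  qed
qed

end
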